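(* Let $x\in\mathcal X$ and $C_1,C_2\in\mathcal I$, and suppose the lines $\ell_{x,C_1}$ and $\ell_{x,C_2}$ intersect at some $\mu>0$. If $\ell_{x,C_1}$ has a larger intercept (value at $\mu=0$) than $\ell_{x,C_2}$, then $w(C_1)>w(C_2)$.
   Context: Let $(X,Y)\sim P_{XY}$ on $\mathcal X\times\mathcal Y$, $\alpha\in(0,1)$, $\mathcal I$ a finite collection of subsets of $\mathcal Y$, $w:\mathcal I\to(0,B)$ a bounded positive weight. For $C\in\mathcal I$ let $p_C(x)=\mathbb P(Y\in C\mid X=x)$ and $\ell_{x,C}(\mu)=w(C)p_C(x)+\mu(p_C(x)-(1-\alpha))$. *)

theory Defs
  imports "HOL-Probability.Probability"
begin

text \<open>The conditional law of Y given X = x is modelled as a Markov kernel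
  K :: 'x => 'y measure (a regular conditional distribution), so that
  p_C(x) = P(Y in C | X = x) = measure (K x) C.\<close>

definition cond_prob :: "('x \<Rightarrow> 'y measure) \<Rightarrow> 'y set \<Rightarrow> 'x \<Rightarrow> real" where
  "cond_prob K C x = measure (K x) C"

definition ell :: "('x \<Rightarrow> 'y measure) \<Rightarrow> ('y set \<Rightarrow> real) \<Rightarrow> real \<Rightarrow> 'x \<Rightarrow> 'y set \<Rightarrow> real \<Rightarrow> real" where
  "ell K w \<alpha> x C \<mu> = w C * cond_prob K C x + \<mu> * (cond_prob K C x - (1 - \<alpha>))"

end

theory Submission
  imports Defs
begin

theorem lemma4:
  fixes K :: "'x \<Rightarrow> 'y measure" and N :: "'y measure"
    and I :: "'y set set" and w :: "'y set \<Rightarrow> real"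
    and \<alpha> B \<mu> :: real and x :: 'x and C1 C2 :: "'y set"
  assumes kernel: "\<And>z. prob_space (K z)" "\<And>z. sets (K z) = sets N"
    and alpha: "0 < \<alpha>" "\<alpha> < 1"
    and I_fin: "finite I" and I_meas: "I \<subseteq> sets N"
    and w_bd: "\<And>C. C \<in> I \<Longrightarrow> 0 < w C \<and> w C < B"
    and C1: "C1 \<in> I" and C2: "C2 \<in> I"
    and mu_pos: "\<mu> > 0"
    and inter: "ell K w \<alpha> x C1 \<mu> = ell K w \<alpha> x C2 \<mu>"
    and intercept: "ell K w \<alpha> x C1 0 > ell K w \<alpha> x C2 0"
  shows "w C1 > w C2"
proof -
  define p1 where "p1 = cond_prob K C1 x"
  define p2 where "p2 = cond_prob K C2 x"
  have p1: "p1 \<ge> 0" "p2 \<ge> 0" unfolding p1_def p2_def cond_prob_def by auto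
  have w: "w C1 > 0" "w C2 > 0" using w_bd C1 C2 by auto
  have i0: "w C1 * p1 > w C2 * p2" using intercept unfolding ell_def p1_def p2_def by simp
  have e: "\<mu> * (p1 - p2) = w C2 * p2 - w C1 * p1"
    using inter unfolding ell_def p1_def p2_def by (simp add: algebra_simps)
  have "\<mu> * (p1 - p2) < 0" using e i0 by simp
  hence lt: "p1 < p2" using mu_pos by (simp add: mult_less_0_iff)
  have "w C2 * p1 \<le> w C2 * p2" using lt w by simp
  hence "w C2 * p1 < w C1 * p1" using i0 by simp
  thus ?thesis using p1 by (metis mult_right_less_imp_less)
qed

end
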